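(* Let $r\ge1$, $G\subset\mathbb{Z}_2^r$ a subgroup with $1^r\in G$, $D_G=\Delta G$, $C_G=D_G^\perp$. For every $d\in D_G$, $\Delta^d$ is a maximal isotropic subgroup of $C_G^d=\mathbb{Z}_2^d\cap C_G$.
   Context: $\Delta:\mathbb{Z}_2^r\to\mathbb{Z}_2^{r+r}$, $g\mapsto(g,g)$. For $c\in\mathbb{Z}_2^{r+r}$, $|c|_l$ and $|c|_r$ are the numbers of ones among the first $r$ and last $r$ coordinates, $|c|=|c|_l-|c|_r$; products of codewords are componentwise. For a subgroup $A$, $A^\perp=\{\beta:|\beta a|\in2\mathbb{Z}\ \forall a\in A\}$. For $d\in\mathbb{Z}_2^{r+r}$, $\mathbb{Z}_2^d=\{\alpha:d\alpha=\alpha\}$ and $\Delta^d=\mathbb{Z}_2^d\cap\Delta(\mathbb{Z}_2^r)$. A subgroup $H$ is isotropic if $|\alpha\beta|\in2\mathbb{Z}$ for all $\alpha,\beta\in H$; maximal isotropic means not properly contained in another isotropic subgroup of $C_G^d$. *)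

theory Defs
  imports Main
begin

text \<open>An element of Z_2^n is represented by its support, a subset of
  {0..<n}. Addition is symmetric difference, the componentwise product is
  intersection, the zero vector is the empty set and the all-ones vector is {0..<n}.
  Z_2^(r+r): the first r coordinates are 0..<r, the last r are r..<2r.\<close>

definition vecs :: "nat \<Rightarrow> nat set set" where
  "vecs n = Pow {0..<n}"

definition vadd :: "nat set \<Rightarrow> nat set \<Rightarrow> nat set" where
  "vadd a b = (a - b) \<union> (b - a)"

definition is_subgroup :: "nat \<Rightarrow> nat set set \<Rightarrow> bool" where
  "is_subgroup n H \<longleftrightarrow> H \<subseteq> vecs n \<and> {} \<in> H \<and> (\<forall>a\<in>H. \<forall>b\<in>H. vadd a b \<in> H)"

definition Delta :: "nat \<Rightarrow> nat set \<Rightarrow> nat set" where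
  "Delta r g = g \<union> (\<lambda>i. i + r) ` g"

definition wl :: "nat \<Rightarrow> nat set \<Rightarrow> nat" where
  "wl r c = card (c \<inter> {0..<r})"
definition wr :: "nat \<Rightarrow> nat set \<Rightarrow> nat" where
  "wr r c = card (c \<inter> {r..<r+r})"
definition wt :: "nat \<Rightarrow> nat set \<Rightarrow> int" where
  "wt r c = int (wl r c) - int (wr r c)"

definition perp :: "nat \<Rightarrow> nat set set \<Rightarrow> nat set set" where
  "perp r A = {\<beta> \<in> vecs (r+r). \<forall>a\<in>A. even (wt r (\<beta> \<inter> a))}"

definition Zd :: "nat \<Rightarrow> nat set \<Rightarrow> nat set set" where
  "Zd r d = {\<alpha> \<in> vecs (r+r). d \<inter> \<alpha> = \<alpha>}"

definition Deltad :: "nat \<Rightarrow> nat set \<Rightarrow> nat set set" where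
  "Deltad r d = Zd r d \<inter> Delta r ` vecs r"

definition isotropic :: "nat \<Rightarrow> nat set set \<Rightarrow> bool" where
  "isotropic r H \<longleftrightarrow> (\<forall>\<alpha>\<in>H. \<forall>\<beta>\<in>H. even (wt r (\<alpha> \<inter> \<beta>)))"

definition max_isotropic_in :: "nat \<Rightarrow> nat set set \<Rightarrow> nat set set \<Rightarrow> bool" where
  "max_isotropic_in r H C \<longleftrightarrow>
     is_subgroup (r+r) H \<and> H \<subseteq> C \<and> isotropic r H \<and>
     (\<forall>K. is_subgroup (r+r) K \<and> K \<subseteq> C \<and> isotropic r K \<and> H \<subseteq> K \<longrightarrow> K = H)"

end

theory Submission
  imports Defs
begin

lemma Delta_inter:
  "a \<subseteq> {0..<r} \<Longrightarrow> b \<subseteq> {0..<r} \<Longrightarrow> Delta r a \<inter> Delta r b = Delta r (a \<inter> b)"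
  unfolding Delta_def by (auto; force)

lemma wt_Delta:
  assumes "h \<subseteq> {0..<r}"
  shows "wt r (Delta r h) = 0"
proof -
  have f: "finite h" using assms finite_subset by blast
  have 1: "Delta r h \<inter> {0..<r} = h" using assms unfolding Delta_def by auto
  have 2: "Delta r h \<inter> {r..<r+r} = (\<lambda>i. i + r) ` h" using assms unfolding Delta_def by auto
  have "card ((\<lambda>i. i + r) ` h) = card h" by (rule card_image) (auto simp: inj_on_def)
  thus ?thesis unfolding wt_def wl_def wr_def 1 2 by simp
qed

lemma Deltad_eq:
  assumes "g \<subseteq> {0..<r}"
  shows "Deltad r (Delta r g) = Delta r ` Pow g"
proof
  show "Deltad r (Delta r g) \<subseteq> Delta r ` Pow g"
  proof
    fix x assume "x \<in> Deltad r (Delta r g)"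
    then obtain h where h: "h \<subseteq> {0..<r}" "x = Delta r h" "x \<subseteq> Delta r g"
      unfolding Deltad_def Zd_def vecs_def by auto
    have "h \<subseteq> g"
    proof
      fix i assume "i \<in> h"
      then have "i \<in> Delta r g" "i < r" using h unfolding Delta_def by auto
      thus "i \<in> g" unfolding Delta_def by auto
    qed
    thus "x \<in> Delta r ` Pow g" using h by auto
  qed
next
  show "Delta r ` Pow g \<subseteq> Deltad r (Delta r g)"
    using assms unfolding Deltad_def Zd_def vecs_def Delta_def by auto
qed

theorem mainTheorem12:
  fixes r :: nat and G :: "nat set set" and d :: "nat set"
  assumes "r \<ge> 1"
    and "is_subgroup r G"
    and "{0..<r} \<in> G"
    and "d \<in> Delta r ` G"
  shows "max_isotropic_in r (Deltad r d) (Zd r d \<inter> perp r (Delta r ` G))"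
proof -
  obtain g where g: "g \<in> G" "d = Delta r g" using assms(4) by auto
  have Gsub: "\<And>x. x \<in> G \<Longrightarrow> x \<subseteq> {0..<r}" using assms(2) unfolding is_subgroup_def vecs_def by auto
  have gs: "g \<subseteq> {0..<r}" using Gsub g by auto
  have D: "Deltad r d = Delta r ` Pow g" using Deltad_eq[OF gs] g by simp
  have sg: "is_subgroup (r+r) (Delta r ` Pow g)"
    unfolding is_subgroup_def
  proof (intro conjI ballI)
    show "Delta r ` Pow g \<subseteq> vecs (r + r)" using gs unfolding vecs_def Delta_def by auto
    show "{} \<in> Delta r ` Pow g" by (rule image_eqI[of _ _ "{}"]) (auto simp: Delta_def)
    fix a b assume "a \<in> Delta r ` Pow g" "b \<in> Delta r ` Pow g"
    then obtain x y where xy: "x \<subseteq> g" "y \<subseteq> g" "a = Delta r x" "b = Delta r y" by auto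
    have "vadd a b = Delta r (vadd x y)" using xy gs unfolding vadd_def Delta_def by (auto; force)
    moreover have "vadd x y \<subseteq> g" using xy unfolding vadd_def by auto
    ultimately show "vadd a b \<in> Delta r ` Pow g" by auto
  qed
  have sub: "Delta r ` Pow g \<subseteq> Zd r d \<inter> perp r (Delta r ` G)"
  proof
    fix a assume "a \<in> Delta r ` Pow g"
    then obtain x where x: "x \<subseteq> g" "a = Delta r x" by auto
    have "a \<in> Zd r d" using x gs g unfolding Zd_def vecs_def Delta_def by auto
    moreover have "a \<in> perp r (Delta r ` G)"
      unfolding perp_def
    proof (intro CollectI conjI ballI)
      show "a \<in> vecs (r+r)" using x gs unfolding vecs_def Delta_def by auto
      fix b assume "b \<in> Delta r ` G"
      then obtain y where y: "y \<in> G" "b = Delta r y" by auto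
      have xs: "x \<subseteq> {0..<r}" using x gs by auto
      have ys: "y \<subseteq> {0..<r}" using y Gsub by auto
      have "a \<inter> b = Delta r (x \<inter> y)" using Delta_inter[OF xs ys] x y by simp
      moreover have "wt r (Delta r (x \<inter> y)) = 0" using xs by (intro wt_Delta) auto
      ultimately show "even (wt r (a \<inter> b))" by simp
    qed
    ultimately show "a \<in> Zd r d \<inter> perp r (Delta r ` G)" by auto
  qed
  have iso: "isotropic r (Delta r ` Pow g)"
    unfolding isotropic_def
  proof (intro ballI)
    fix a b assume "a \<in> Delta r ` Pow g" "b \<in> Delta r ` Pow g"
    then obtain x y where xy: "x \<subseteq> g" "y \<subseteq> g" "a = Delta r x" "b = Delta r y" by auto
    have xs: "x \<subseteq> {0..<r}" "y \<subseteq> {0..<r}" using xy gs by auto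
    have "a \<inter> b = Delta r (x \<inter> y)" using Delta_inter[OF xs] xy by simp
    moreover have "wt r (Delta r (x \<inter> y)) = 0" using xs by (intro wt_Delta) auto
    ultimately show "even (wt r (a \<inter> b))" by simp
  qed
  have maxi: "K = Delta r ` Pow g" if K: "is_subgroup (r+r) K" "K \<subseteq> Zd r d \<inter> perp r (Delta r ` G)"
    "isotropic r K" "Delta r ` Pow g \<subseteq> K" for K
  proof
    show "K \<subseteq> Delta r ` Pow g"
    proof
      fix \<alpha> assume a: "\<alpha> \<in> K"
      have ad: "\<alpha> \<subseteq> Delta r g" using a K(2) g unfolding Zd_def by auto
      have eqv: "i \<in> \<alpha> \<longleftrightarrow> i + r \<in> \<alpha>" if i: "i \<in> g" for i
      proof -
        have ir: "i < r" using i gs by auto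
        have "Delta r {i} \<in> K" using K(4) i by auto
        hence ev: "even (wt r (\<alpha> \<inter> Delta r {i}))" using K(3) a unfolding isotropic_def by auto
        have 1: "\<alpha> \<inter> Delta r {i} \<inter> {0..<r} = \<alpha> \<inter> {i}" using ir unfolding Delta_def by auto
        have 2: "\<alpha> \<inter> Delta r {i} \<inter> {r..<r+r} = \<alpha> \<inter> {i+r}" using ir unfolding Delta_def by auto
        have "even (int (card (\<alpha> \<inter> {i})) - int (card (\<alpha> \<inter> {i+r})))"
          using ev unfolding wt_def wl_def wr_def 1 2 .
        thus ?thesis by (cases "i \<in> \<alpha>"; cases "i + r \<in> \<alpha>") auto
      qed
      have "\<alpha> = Delta r (\<alpha> \<inter> {0..<r})"
      proof
        show "\<alpha> \<subseteq> Delta r (\<alpha> \<inter> {0..<r})"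
        proof
          fix x assume x: "x \<in> \<alpha>"
          then have "x \<in> Delta r g" using ad by auto
          then consider "x \<in> g" | j where "j \<in> g" "x = j + r" unfolding Delta_def by auto
          then show "x \<in> Delta r (\<alpha> \<inter> {0..<r})"
          proof cases
            case 1 then show ?thesis using x gs unfolding Delta_def by auto
          next
            case 2 then have "j \<in> \<alpha>" "j < r" using eqv x gs by auto
            then show ?thesis using 2 unfolding Delta_def by auto
          qed
        qed
        show "Delta r (\<alpha> \<inter> {0..<r}) \<subseteq> \<alpha>"
        proof
          fix x assume "x \<in> Delta r (\<alpha> \<inter> {0..<r})"
          then consider "x \<in> \<alpha>" | j where "j \<in> \<alpha>" "j < r" "x = j + r" unfolding Delta_def by auto
          then show "x \<in> \<alpha>"
          proof cases
            case 2
            then have "j \<in> Delta r g" using ad by auto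
            then have "j \<in> g" using 2 unfolding Delta_def by auto
            then show ?thesis using eqv 2 by auto
          qed auto
        qed
      qed
      moreover have "\<alpha> \<inter> {0..<r} \<subseteq> g" using ad unfolding Delta_def by auto
      ultimately show "\<alpha> \<in> Delta r ` Pow g" by blast
    qed
  qed (use K in auto)
  show ?thesis unfolding max_isotropic_in_def D using sg sub iso maxi by blast
qed

end
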